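(* Let $R$ be a commutative Noetherian ring of prime characteristic $p$, let $(H^{(\lambda)})_{\lambda\in\Lambda}$ be a non-empty family of $\mathbb{Z}$-graded left $R[x,f]$-modules, and let $H:=\prod'_{\lambda\in\Lambda}H^{(\lambda)}$. Then: (i) $\mathcal{G}(H)=\left\{\bigcap_{\lambda\in\Lambda}\mathfrak{B}_\lambda : \mathfrak{B}_\lambda\in\mathcal{G}(H^{(\lambda)})\text{ for all }\lambda\in\Lambda\right\}$; (ii) consequently, if there is a set $\mathcal{G}'$ of graded two-sided ideals of $R[x,f]$ with $\mathcal{G}(H^{(\lambda)})=\mathcal{G}'$ for all $\lambda\in\Lambda$, then $\mathcal{G}(H)=\mathcal{G}'$; (iii) $\operatorname{HSL}(H)=\sup\{\operatorname{HSL}(H^{(\lambda)}):\lambda\in\Lambda\}$ (even if some $\operatorname{HSL}(H^{(\mu)})=\infty$); thus $H$ is $x$-torsion-free if and only if every $H^{(\lambda)}$ is $x$-torsion-free; (iv) if $\operatorname{HSL}(H)$ is finite, then $\Gamma_x(H)=\prod'_{\lambda\in\Lambda}\Gamma_x(H^{(\lambda)})$ and there is a homogeneous isomorphism of graded left $R[x,f]$-modules $H/\Gamma_x(H)\cong\prod'_{\lambda\in\Lambda}H^{(\lambda)}/\Gamma_x(H^{(\lambda)})$.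
   Context: $R[x,f]$ denotes the Frobenius skew polynomial ring over $R$: as a left $R$-module it is free on $(x^i)_{i\in\mathbb{N}_0}$, with multiplication subject to $xr = r^px$; it is graded with $n$th component $Rx^n$. For $\mathbb{Z}$-graded left $R[x,f]$-modules $H^{(\lambda)}=\bigoplus_n H^{(\lambda)}_n$, $\prod'_{\lambda}H^{(\lambda)}$ denotes the graded left $R[x,f]$-module $\bigoplus_{n\in\mathbb{Z}}\prod_{\lambda}H^{(\lambda)}_n$ with $x$ acting componentwise, $x(h_n^{(\lambda)})_\lambda=(xh_n^{(\lambda)})_\lambda$ (the product in the category of graded left $R[x,f]$-modules and degree-$0$ homogeneous homomorphisms). For a left $R[x,f]$-module $M$: $\operatorname{grann}_{R[x,f]}M$ is the largest graded two-sided ideal of $R[x,f]$ annihilating $M$; $\mathcal{G}(M)$ is the set of graded annihilators of all $R[x,f]$-submodules of $M$; $\Gamma_x(M)=\{m\in M: x^jm=0\text{ for some }j\in\mathbb{N}\}$ is the $x$-torsion submodule, and $M$ is $x$-torsion-free if $\Gamma_x(M)=0$; $\operatorname{HSL}(M)$ is the least $e\in\mathbb{N}_0$ with $x^e\Gamma_x(M)=0$, and $\operatorname{HSL}(M)=\infty$ if no such $e$ exists. *)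

theory Defs
  imports Main "HOL-Library.Extended_Nat" "HOL-Computational_Algebra.Polynomial"
begin

definition ring_ideal :: "'r::comm_ring_1 set \<Rightarrow> bool" where
  "ring_ideal I \<longleftrightarrow> 0 \<in> I \<and> (\<forall>a\<in>I. \<forall>b\<in>I. a + b \<in> I) \<and> (\<forall>r. \<forall>a\<in>I. r * a \<in> I)"

definition noetherian :: "'r::comm_ring_1 itself \<Rightarrow> bool" where
  "noetherian _ \<longleftrightarrow> (\<forall>I::'r set. ring_ideal I \<longrightarrow>
      (\<exists>F. finite F \<and> F \<subseteq> I \<and> I = {\<Sum>a\<in>F. c a * a | c. True}))"

text \<open>Elements of R[x,f] are represented by polynomials sum r_i x^i (left R-basis x^i);
  the multiplication obeys x r = r^p x.\<close>

definition skmul :: "nat \<Rightarrow> 'r::comm_ring_1 poly \<Rightarrow> 'r poly \<Rightarrow> 'r poly" where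
  "skmul p a b = Poly (map (\<lambda>n. \<Sum>i\<le>n. coeff a i * coeff b (n - i) ^ (p ^ i))
                          [0..<degree a + degree b + 1])"

definition graded_ideal :: "nat \<Rightarrow> 'r::comm_ring_1 poly set \<Rightarrow> bool" where
  "graded_ideal p I \<longleftrightarrow> 0 \<in> I \<and> (\<forall>a\<in>I. \<forall>b\<in>I. a + b \<in> I) \<and> (\<forall>a\<in>I. - a \<in> I)
     \<and> (\<forall>a\<in>I. \<forall>t. skmul p t a \<in> I \<and> skmul p a t \<in> I)
     \<and> (\<forall>a\<in>I. \<forall>n. monom (coeff a n) n \<in> I)"

text \<open>A Z-graded left R[x,f]-module is given by its homogeneous components H_n (carrier
  sets with their own R-module operations) and the action of x, H_n -> H_(n+1).\<close>

record ('r, 'm) gmod =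
  gcomp :: "int \<Rightarrow> 'm set"
  gzero :: "int \<Rightarrow> 'm"
  gadd  :: "int \<Rightarrow> 'm \<Rightarrow> 'm \<Rightarrow> 'm"
  gneg  :: "int \<Rightarrow> 'm \<Rightarrow> 'm"
  gsmult :: "int \<Rightarrow> 'r \<Rightarrow> 'm \<Rightarrow> 'm"
  gx    :: "int \<Rightarrow> 'm \<Rightarrow> 'm"

definition is_gmod :: "nat \<Rightarrow> ('r::comm_ring_1, 'm) gmod \<Rightarrow> bool" where
  "is_gmod p M \<longleftrightarrow> (\<forall>n. let C = gcomp M n; z = gzero M n; ad = gadd M n; ng = gneg M n;
        sm = gsmult M n in
      z \<in> C \<and> (\<forall>a\<in>C. \<forall>b\<in>C. ad a b \<in> C) \<and> (\<forall>a\<in>C. ng a \<in> C)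
      \<and> (\<forall>r. \<forall>a\<in>C. sm r a \<in> C) \<and> (\<forall>a\<in>C. gx M n a \<in> gcomp M (n + 1))
      \<and> (\<forall>a\<in>C. \<forall>b\<in>C. \<forall>c\<in>C. ad (ad a b) c = ad a (ad b c))
      \<and> (\<forall>a\<in>C. \<forall>b\<in>C. ad a b = ad b a)
      \<and> (\<forall>a\<in>C. ad z a = a) \<and> (\<forall>a\<in>C. ad (ng a) a = z)
      \<and> (\<forall>r. \<forall>a\<in>C. \<forall>b\<in>C. sm r (ad a b) = ad (sm r a) (sm r b))
      \<and> (\<forall>r s. \<forall>a\<in>C. sm (r + s) a = ad (sm r a) (sm s a))
      \<and> (\<forall>r s. \<forall>a\<in>C. sm (r * s) a = sm r (sm s a))
      \<and> (\<forall>a\<in>C. sm 1 a = a)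
      \<and> (\<forall>a\<in>C. \<forall>b\<in>C. gx M n (ad a b) = gadd M (n + 1) (gx M n a) (gx M n b))
      \<and> (\<forall>r. \<forall>a\<in>C. gx M n (sm r a) = gsmult M (n + 1) (r ^ p) (gx M n a)))"

subsection \<open>The underlying module H = direct sum of the H_n\<close>

definition elems :: "('r, 'm) gmod \<Rightarrow> (int \<Rightarrow> 'm) set" where
  "elems M = {h. (\<forall>n. h n \<in> gcomp M n) \<and> finite {n. h n \<noteq> gzero M n}}"

definition fzero :: "('r, 'm) gmod \<Rightarrow> int \<Rightarrow> 'm" where
  "fzero M = gzero M"

definition fadd :: "('r, 'm) gmod \<Rightarrow> (int \<Rightarrow> 'm) \<Rightarrow> (int \<Rightarrow> 'm) \<Rightarrow> int \<Rightarrow> 'm" where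
  "fadd M h k = (\<lambda>n. gadd M n (h n) (k n))"

definition fsm :: "('r, 'm) gmod \<Rightarrow> 'r \<Rightarrow> (int \<Rightarrow> 'm) \<Rightarrow> int \<Rightarrow> 'm" where
  "fsm M r h = (\<lambda>n. gsmult M n r (h n))"

definition fx :: "('r, 'm) gmod \<Rightarrow> (int \<Rightarrow> 'm) \<Rightarrow> int \<Rightarrow> 'm" where
  "fx M h = (\<lambda>n. gx M (n - 1) (h (n - 1)))"

primrec fsum :: "('r, 'm) gmod \<Rightarrow> (nat \<Rightarrow> int \<Rightarrow> 'm) \<Rightarrow> nat \<Rightarrow> int \<Rightarrow> 'm" where
  "fsum M f 0 = fzero M"
| "fsum M f (Suc k) = fadd M (fsum M f k) (f k)"

definition act :: "('r::comm_ring_1, 'm) gmod \<Rightarrow> 'r poly \<Rightarrow> (int \<Rightarrow> 'm) \<Rightarrow> int \<Rightarrow> 'm" where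
  "act M t h = fsum M (\<lambda>i. fsm M (coeff t i) ((fx M ^^ i) h)) (Suc (degree t))"

definition submod :: "('r::comm_ring_1, 'm) gmod \<Rightarrow> (int \<Rightarrow> 'm) set \<Rightarrow> bool" where
  "submod M N \<longleftrightarrow> N \<subseteq> elems M \<and> fzero M \<in> N \<and> (\<forall>h\<in>N. \<forall>k\<in>N. fadd M h k \<in> N)
      \<and> (\<forall>t. \<forall>h\<in>N. act M t h \<in> N)"

definition grann :: "nat \<Rightarrow> ('r::comm_ring_1, 'm) gmod \<Rightarrow> (int \<Rightarrow> 'm) set \<Rightarrow> 'r poly set" where
  "grann p M N = (GREATEST I. graded_ideal p I \<and> (\<forall>t\<in>I. \<forall>h\<in>N. act M t h = fzero M))"

definition Gset :: "nat \<Rightarrow> ('r::comm_ring_1, 'm) gmod \<Rightarrow> 'r poly set set" where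
  "Gset p M = {grann p M N | N. submod M N}"

definition Gamma :: "('r, 'm) gmod \<Rightarrow> (int \<Rightarrow> 'm) set" where
  "Gamma M = {h \<in> elems M. \<exists>j\<ge>1. (fx M ^^ j) h = fzero M}"

definition x_torsion_free :: "('r, 'm) gmod \<Rightarrow> bool" where
  "x_torsion_free M \<longleftrightarrow> Gamma M = {fzero M}"

definition HSL :: "('r, 'm) gmod \<Rightarrow> enat" where
  "HSL M = (if \<exists>e. \<forall>h\<in>Gamma M. (fx M ^^ e) h = fzero M
            then enat (LEAST e. \<forall>h\<in>Gamma M. (fx M ^^ e) h = fzero M) else \<infinity>)"

text \<open>Product prod' over the index type 'l: n-th component is the product of the n-th
  components, x acting componentwise.\<close>
definition gprod :: "('l \<Rightarrow> ('r, 'm) gmod) \<Rightarrow> ('r, 'l \<Rightarrow> 'm) gmod" where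
  "gprod H = \<lparr> gcomp = (\<lambda>n. {v. \<forall>l. v l \<in> gcomp (H l) n}),
               gzero = (\<lambda>n l. gzero (H l) n),
               gadd = (\<lambda>n v w l. gadd (H l) n (v l) (w l)),
               gneg = (\<lambda>n v l. gneg (H l) n (v l)),
               gsmult = (\<lambda>n r v l. gsmult (H l) n r (v l)),
               gx = (\<lambda>n v l. gx (H l) n (v l)) \<rparr>"

definition hom_part :: "('r, 'm) gmod \<Rightarrow> (int \<Rightarrow> 'm) set \<Rightarrow> int \<Rightarrow> 'm set" where
  "hom_part M S n = {m \<in> gcomp M n. (\<lambda>k. if k = n then m else gzero M k) \<in> S}"

definition gsub :: "('r, 'm) gmod \<Rightarrow> (int \<Rightarrow> 'm) set \<Rightarrow> ('r, 'm) gmod" where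
  "gsub M S = M \<lparr> gcomp := hom_part M S \<rparr>"

definition coset :: "('r, 'm) gmod \<Rightarrow> (int \<Rightarrow> 'm) set \<Rightarrow> int \<Rightarrow> 'm \<Rightarrow> 'm set" where
  "coset M S n m = {gadd M n m s | s. s \<in> hom_part M S n}"

text \<open>Quotient of M by a graded submodule S; elements of degree n are cosets m + S_n.\<close>
definition gquot :: "('r, 'm) gmod \<Rightarrow> (int \<Rightarrow> 'm) set \<Rightarrow> ('r, 'm set) gmod" where
  "gquot M S = \<lparr> gcomp = (\<lambda>n. coset M S n ` gcomp M n),
               gzero = (\<lambda>n. hom_part M S n),
               gadd = (\<lambda>n A B. {gadd M n a b | a b. a \<in> A \<and> b \<in> B}),
               gneg = (\<lambda>n A. gneg M n ` A),
               gsmult = (\<lambda>n r A. {gadd M n (gsmult M n r a) s | a s. a \<in> A \<and> s \<in> hom_part M S n}),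
               gx = (\<lambda>n A. {gadd M (n + 1) (gx M n a) s | a s. a \<in> A \<and> s \<in> hom_part M S (n + 1)}) \<rparr>"

definition giso :: "('r, 'a) gmod \<Rightarrow> ('r, 'b) gmod \<Rightarrow> (int \<Rightarrow> 'a \<Rightarrow> 'b) \<Rightarrow> bool" where
  "giso M N \<phi> \<longleftrightarrow> (\<forall>n. bij_betw (\<phi> n) (gcomp M n) (gcomp N n)
      \<and> (\<forall>a\<in>gcomp M n. \<forall>b\<in>gcomp M n. \<phi> n (gadd M n a b) = gadd N n (\<phi> n a) (\<phi> n b))
      \<and> (\<forall>r. \<forall>a\<in>gcomp M n. \<phi> n (gsmult M n r a) = gsmult N n r (\<phi> n a))
      \<and> (\<forall>a\<in>gcomp M n. \<phi> (n + 1) (gx M n a) = gx N n (\<phi> n a)))"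

end

theory Submission
  imports Defs "HOL-Computational_Algebra.Primes"
begin

definition Vs :: "('r, 'm) gmod \<Rightarrow> (int \<Rightarrow> 'm) set" where
  "Vs M = {h. \<forall>n. h n \<in> gcomp M n}"

lemma VsI: "(\<And>n. h n \<in> gcomp M n) \<Longrightarrow> h \<in> Vs M" by (simp add: Vs_def)
lemma VsD: "h \<in> Vs M \<Longrightarrow> h n \<in> gcomp M n" by (simp add: Vs_def)


context
  fixes p :: nat and M :: "('r::comm_ring_1, 'm) gmod"
  assumes gm: "is_gmod p M"
begin

lemma gzero_in: "gzero M n \<in> gcomp M n"
  using gm by (auto simp: is_gmod_def Let_def)
lemma gadd_in: "a \<in> gcomp M n \<Longrightarrow> b \<in> gcomp M n \<Longrightarrow> gadd M n a b \<in> gcomp M n"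
  using gm by (auto simp: is_gmod_def Let_def)
lemma gneg_in: "a \<in> gcomp M n \<Longrightarrow> gneg M n a \<in> gcomp M n"
  using gm by (auto simp: is_gmod_def Let_def)
lemma gsm_in: "a \<in> gcomp M n \<Longrightarrow> gsmult M n r a \<in> gcomp M n"
  using gm by (auto simp: is_gmod_def Let_def)
lemma gx_in: "a \<in> gcomp M n \<Longrightarrow> gx M n a \<in> gcomp M (n + 1)"
  using gm by (auto simp: is_gmod_def Let_def)
lemma gassoc: "a \<in> gcomp M n \<Longrightarrow> b \<in> gcomp M n \<Longrightarrow> c \<in> gcomp M n \<Longrightarrow>
   gadd M n (gadd M n a b) c = gadd M n a (gadd M n b c)"
  using spec[OF gm[unfolded is_gmod_def], of n] unfolding Let_def by (elim conjE) (drule bspec, assumption, drule bspec, assumption, drule bspec, assumption, assumption)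
lemma gcomm: "a \<in> gcomp M n \<Longrightarrow> b \<in> gcomp M n \<Longrightarrow> gadd M n a b = gadd M n b a"
  using spec[OF gm[unfolded is_gmod_def], of n] unfolding Let_def by blast
lemma glid: "a \<in> gcomp M n \<Longrightarrow> gadd M n (gzero M n) a = a"
  using spec[OF gm[unfolded is_gmod_def], of n] unfolding Let_def by blast
lemma glinv: "a \<in> gcomp M n \<Longrightarrow> gadd M n (gneg M n a) a = gzero M n"
  using spec[OF gm[unfolded is_gmod_def], of n] unfolding Let_def by blast
lemma gsm_add: "a \<in> gcomp M n \<Longrightarrow> b \<in> gcomp M n \<Longrightarrow>
   gsmult M n r (gadd M n a b) = gadd M n (gsmult M n r a) (gsmult M n r b)"
  using spec[OF gm[unfolded is_gmod_def], of n] unfolding Let_def by blast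
lemma gadd_sm: "a \<in> gcomp M n \<Longrightarrow> gsmult M n (r + s) a = gadd M n (gsmult M n r a) (gsmult M n s a)"
  using spec[OF gm[unfolded is_gmod_def], of n] unfolding Let_def by blast
lemma gx_add: "a \<in> gcomp M n \<Longrightarrow> b \<in> gcomp M n \<Longrightarrow>
   gx M n (gadd M n a b) = gadd M (n + 1) (gx M n a) (gx M n b)"
  using spec[OF gm[unfolded is_gmod_def], of n] unfolding Let_def by blast

lemma grid: "a \<in> gcomp M n \<Longrightarrow> gadd M n a (gzero M n) = a"
  using gcomm glid gzero_in by metis

lemma gcancel: assumes "a \<in> gcomp M n" "gadd M n a a = a" shows "a = gzero M n"
proof -
  have "gzero M n = gadd M n (gneg M n a) a" using glinv assms by simp
  also have "\<dots> = gadd M n (gneg M n a) (gadd M n a a)" using assms by simp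
  also have "\<dots> = gadd M n (gadd M n (gneg M n a) a) a"
    using gassoc assms gneg_in by metis
  also have "\<dots> = a" using glinv glid assms by simp
  finally show ?thesis by simp
qed

lemma gx_zero: "gx M n (gzero M n) = gzero M (n + 1)"
proof -
  have "gx M n (gzero M n) = gx M n (gadd M n (gzero M n) (gzero M n))"
    using glid gzero_in by simp
  also have "\<dots> = gadd M (n+1) (gx M n (gzero M n)) (gx M n (gzero M n))"
    using gx_add gzero_in by blast
  finally show ?thesis using gcancel gx_in gzero_in by metis
qed

lemma gsm_zero: "gsmult M n r (gzero M n) = gzero M n"
proof -
  have "gsmult M n r (gzero M n) = gsmult M n r (gadd M n (gzero M n) (gzero M n))"
    using glid gzero_in by simp
  also have "\<dots> = gadd M n (gsmult M n r (gzero M n)) (gsmult M n r (gzero M n))"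
    using gsm_add gzero_in by blast
  finally show ?thesis using gcancel gsm_in gzero_in by metis
qed

lemma gsm_0: assumes "a \<in> gcomp M n" shows "gsmult M n 0 a = gzero M n"
proof -
  have "gsmult M n 0 a = gsmult M n (0 + 0) a" by simp
  also have "\<dots> = gadd M n (gsmult M n 0 a) (gsmult M n 0 a)" using gadd_sm assms by blast
  finally show ?thesis using gcancel gsm_in assms by metis
qed

lemma gzz: "gadd M n (gzero M n) (gzero M n) = gzero M n"
  using glid gzero_in by blast


lemma fzero_V: "fzero M \<in> Vs M" by (simp add: Vs_def fzero_def gzero_in)
lemma fadd_V: "a \<in> Vs M \<Longrightarrow> b \<in> Vs M \<Longrightarrow> fadd M a b \<in> Vs M"
  by (simp add: Vs_def fadd_def gadd_in)
lemma fsm_V: "a \<in> Vs M \<Longrightarrow> fsm M r a \<in> Vs M"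
  by (simp add: Vs_def fsm_def gsm_in)
lemma fx_V: assumes "a \<in> Vs M" shows "fx M a \<in> Vs M"
proof (rule VsI)
  fix n
  have "gx M (n - 1) (a (n - 1)) \<in> gcomp M (n - 1 + 1)" by (rule gx_in, rule VsD, rule assms)
  then show "fx M a n \<in> gcomp M n" by (simp add: fx_def)
qed
lemma fxpow_V: "a \<in> Vs M \<Longrightarrow> (fx M ^^ i) a \<in> Vs M"
  by (induction i) (auto simp: fx_V)
lemma fsum_V: "(\<And>i. i < k \<Longrightarrow> f i \<in> Vs M) \<Longrightarrow> fsum M f k \<in> Vs M"
  by (induction k) (auto simp: fzero_V fadd_V)

lemma fadd_assoc: "a \<in> Vs M \<Longrightarrow> b \<in> Vs M \<Longrightarrow> c \<in> Vs M \<Longrightarrow>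
   fadd M (fadd M a b) c = fadd M a (fadd M b c)"
  by (simp add: fadd_def Vs_def gassoc)
lemma fadd_comm: "a \<in> Vs M \<Longrightarrow> b \<in> Vs M \<Longrightarrow> fadd M a b = fadd M b a"
  unfolding fadd_def Vs_def using gcomm by auto
lemma fadd_lid: "a \<in> Vs M \<Longrightarrow> fadd M (fzero M) a = a"
  by (simp add: fadd_def fzero_def Vs_def glid)
lemma fadd_rid: "a \<in> Vs M \<Longrightarrow> fadd M a (fzero M) = a"
  by (simp add: fadd_def fzero_def Vs_def grid)
lemma gswap: assumes "a \<in> gcomp M n" "b \<in> gcomp M n" "c \<in> gcomp M n" "d \<in> gcomp M n"
  shows "gadd M n (gadd M n a b) (gadd M n c d) = gadd M n (gadd M n a c) (gadd M n b d)"
proof -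
  have "gadd M n (gadd M n a b) (gadd M n c d) = gadd M n a (gadd M n (gadd M n b c) d)"
    using assms by (simp add: gassoc gadd_in)
  also have "gadd M n b c = gadd M n c b" using gcomm assms by blast
  also have "gadd M n a (gadd M n (gadd M n c b) d) = gadd M n (gadd M n a c) (gadd M n b d)"
    using assms by (simp add: gassoc gadd_in)
  finally show ?thesis .
qed
lemma fadd_swap: "a \<in> Vs M \<Longrightarrow> b \<in> Vs M \<Longrightarrow> c \<in> Vs M \<Longrightarrow> d \<in> Vs M \<Longrightarrow>
   fadd M (fadd M a b) (fadd M c d) = fadd M (fadd M a c) (fadd M b d)"
  by (simp add: fadd_def Vs_def gswap)
lemma fzz: "fadd M (fzero M) (fzero M) = fzero M"
  by (simp add: fadd_lid fzero_V)

lemma fsm_zero: "fsm M r (fzero M) = fzero M"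
  by (simp add: fsm_def fzero_def gsm_zero)
lemma fsm_0: "a \<in> Vs M \<Longrightarrow> fsm M 0 a = fzero M"
  by (simp add: fsm_def fzero_def Vs_def gsm_0)
lemma fsm_add: "a \<in> Vs M \<Longrightarrow> b \<in> Vs M \<Longrightarrow> fsm M r (fadd M a b) = fadd M (fsm M r a) (fsm M r b)"
  by (simp add: fsm_def fadd_def Vs_def gsm_add)
lemma fadd_sm: "a \<in> Vs M \<Longrightarrow> fsm M (r + s) a = fadd M (fsm M r a) (fsm M s a)"
  by (simp add: fsm_def fadd_def Vs_def gadd_sm)
lemma fx_zero: "fx M (fzero M) = fzero M"
proof
  fix n
  have "gx M (n - 1) (gzero M (n - 1)) = gzero M (n - 1 + 1)" by (rule gx_zero)
  then show "fx M (fzero M) n = fzero M n" by (simp add: fx_def fzero_def)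
qed
lemma fx_add: assumes "a \<in> Vs M" "b \<in> Vs M" shows "fx M (fadd M a b) = fadd M (fx M a) (fx M b)"
proof
  fix n
  have "gx M (n - 1) (gadd M (n - 1) (a (n - 1)) (b (n - 1))) =
     gadd M (n - 1 + 1) (gx M (n - 1) (a (n - 1))) (gx M (n - 1) (b (n - 1)))"
    by (rule gx_add) (use assms in \<open>simp_all add: VsD\<close>)
  then show "fx M (fadd M a b) n = fadd M (fx M a) (fx M b) n" by (simp add: fx_def fadd_def)
qed
lemma fxpow_zero: "(fx M ^^ i) (fzero M) = fzero M"
  by (induction i) (auto simp: fx_zero)
lemma fxpow_add: "a \<in> Vs M \<Longrightarrow> b \<in> Vs M \<Longrightarrow>
   (fx M ^^ i) (fadd M a b) = fadd M ((fx M ^^ i) a) ((fx M ^^ i) b)"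
  by (induction i) (auto simp: fx_add fxpow_V)

lemma fsum_add: "(\<And>i. i < k \<Longrightarrow> f i \<in> Vs M) \<Longrightarrow> (\<And>i. i < k \<Longrightarrow> g i \<in> Vs M) \<Longrightarrow>
   fsum M (\<lambda>i. fadd M (f i) (g i)) k = fadd M (fsum M f k) (fsum M g k)"
proof (induction k)
  case 0 thus ?case by (simp add: fzz)
next
  case (Suc k)
  thus ?case by (simp add: fadd_swap fsum_V)
qed
lemma fsum_zero: "(\<And>i. i < k \<Longrightarrow> f i = fzero M) \<Longrightarrow> fsum M f k = fzero M"
  by (induction k) (auto simp: fzz)
lemma fsum_pad: "(\<And>i. i < k \<Longrightarrow> f i \<in> Vs M) \<Longrightarrow> (\<And>i. i \<ge> k \<Longrightarrow> f i = fzero M) \<Longrightarrow>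
   k \<le> D \<Longrightarrow> fsum M f D = fsum M f k"
proof (induction D)
  case 0 thus ?case by simp
next
  case (Suc D)
  show ?case
  proof (cases "k = Suc D")
    case False
    then have "k \<le> D" using Suc by simp
    then show ?thesis using Suc by (simp add: fadd_rid fsum_V)
  qed simp
qed

lemma act_alt: assumes "h \<in> Vs M" "Suc (degree t) \<le> D"
  shows "act M t h = fsum M (\<lambda>i. fsm M (coeff t i) ((fx M ^^ i) h)) D"
  unfolding act_def
  by (rule fsum_pad[symmetric]) (use assms in \<open>auto simp: fsm_V fxpow_V coeff_eq_0 fsm_0\<close>)

lemma act_add_t: assumes "h \<in> Vs M"
  shows "act M (a + b) h = fadd M (act M a h) (act M b h)"
proof -
  define D where "D = Suc (max (degree a) (degree b))"
  have "degree (a + b) \<le> max (degree a) (degree b)" by (rule degree_add_le_max)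
  then have "act M (a + b) h = fsum M (\<lambda>i. fsm M (coeff (a + b) i) ((fx M ^^ i) h)) D"
    by (intro act_alt assms) (simp add: D_def)
  also have "\<dots> = fsum M (\<lambda>i. fadd M (fsm M (coeff a i) ((fx M ^^ i) h)) (fsm M (coeff b i) ((fx M ^^ i) h))) D"
    using assms by (simp only: coeff_add fadd_sm fxpow_V)
  also have "\<dots> = fadd M (fsum M (\<lambda>i. fsm M (coeff a i) ((fx M ^^ i) h)) D) (fsum M (\<lambda>i. fsm M (coeff b i) ((fx M ^^ i) h)) D)"
    by (rule fsum_add) (simp_all add: fsm_V fxpow_V assms)
  also have "\<dots> = fadd M (act M a h) (act M b h)"
    using act_alt[OF assms, of a D] act_alt[OF assms, of b D] by (simp add: D_def)
  finally show ?thesis .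
qed

lemma act_zero_t: assumes "h \<in> Vs M" shows "act M 0 h = fzero M"
proof -
  have "act M 0 h = fadd M (fzero M) (fsm M 0 h)" by (simp add: act_def)
  also have "\<dots> = fzero M" using assms by (simp only: fsm_0 fzz)
  finally show ?thesis .
qed

lemma act_add_h: assumes "h \<in> Vs M" "k \<in> Vs M"
  shows "act M t (fadd M h k) = fadd M (act M t h) (act M t k)"
proof -
  have eq: "\<And>i. fsm M (coeff t i) ((fx M ^^ i) (fadd M h k)) =
     fadd M (fsm M (coeff t i) ((fx M ^^ i) h)) (fsm M (coeff t i) ((fx M ^^ i) k))"
    using assms by (simp add: fxpow_add fsm_add fxpow_V)
  have v: "\<And>i. fsm M (coeff t i) ((fx M ^^ i) h) \<in> Vs M" "\<And>i. fsm M (coeff t i) ((fx M ^^ i) k) \<in> Vs M"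
    by (intro fsm_V fxpow_V assms)+
  show ?thesis unfolding act_def eq by (intro fsum_add v)
qed

lemma act_zero_h: "act M t (fzero M) = fzero M"
proof -
  have "\<And>i. fsm M (coeff t i) ((fx M ^^ i) (fzero M)) = fzero M"
    by (simp only: fxpow_zero fsm_zero)
  then show ?thesis unfolding act_def by (intro fsum_zero)
qed

lemma act_V: assumes "h \<in> Vs M" shows "act M t h \<in> Vs M"
proof -
  have "\<And>i. fsm M (coeff t i) ((fx M ^^ i) h) \<in> Vs M" by (intro fsm_V fxpow_V assms)
  then show ?thesis unfolding act_def by (intro fsum_V)
qed

end


primrec gxi :: "('r, 'm) gmod \<Rightarrow> nat \<Rightarrow> int \<Rightarrow> 'm \<Rightarrow> 'm" where
  "gxi M 0 n m = m"
| "gxi M (Suc j) n m = gx M (n + int j) (gxi M j n m)"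

definition single :: "('r, 'm) gmod \<Rightarrow> int \<Rightarrow> 'm \<Rightarrow> int \<Rightarrow> 'm" where
  "single M n m = (\<lambda>k. if k = n then m else gzero M k)"

definition kill :: "('r, 'm) gmod \<Rightarrow> nat \<Rightarrow> bool" where
  "kill M e \<longleftrightarrow> (\<forall>h\<in>Gamma M. (fx M ^^ e) h = fzero M)"

lemma fxpow_eval: "(fx M ^^ j) h n = gxi M j (n - int j) (h (n - int j))"
proof (induction j arbitrary: n)
  case 0 thus ?case by simp
next
  case (Suc j)
  have "(fx M ^^ Suc j) h n = gx M (n - 1) ((fx M ^^ j) h (n - 1))" by (simp add: fx_def)
  also have "\<dots> = gx M (n - 1) (gxi M j (n - 1 - int j) (h (n - 1 - int j)))" using Suc by simp
  also have "n - 1 - int j = n - int (Suc j)" by simp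
  also have "n - 1 = n - int (Suc j) + int j" by simp
  finally show ?case by simp
qed

lemma elems_iff: "h \<in> elems M \<longleftrightarrow> h \<in> Vs M \<and> finite {n. h n \<noteq> gzero M n}"
  by (simp add: elems_def Vs_def)

context
  fixes p :: nat and M :: "('r::comm_ring_1, 'm) gmod"
  assumes gm: "is_gmod p M"
begin

lemma fzero_elems: "fzero M \<in> elems M"
  by (simp add: elems_iff fzero_V[OF gm]) (simp add: fzero_def)

lemma fadd_elems: assumes "a \<in> elems M" "b \<in> elems M" shows "fadd M a b \<in> elems M"
proof -
  have "{n. fadd M a b n \<noteq> gzero M n} \<subseteq> {n. a n \<noteq> gzero M n} \<union> {n. b n \<noteq> gzero M n}"
    by (auto simp: fadd_def gzz[OF gm])
  then show ?thesis using assms by (auto simp: elems_iff fadd_V[OF gm] intro: finite_subset)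
qed

lemma fsm_elems: assumes "a \<in> elems M" shows "fsm M r a \<in> elems M"
proof -
  have "{n. fsm M r a n \<noteq> gzero M n} \<subseteq> {n. a n \<noteq> gzero M n}"
    by (auto simp: fsm_def gsm_zero[OF gm])
  then show ?thesis using assms by (auto simp: elems_iff fsm_V[OF gm] intro: finite_subset)
qed

lemma fx_elems: assumes "a \<in> elems M" shows "fx M a \<in> elems M"
proof -
  have "{n. fx M a n \<noteq> gzero M n} \<subseteq> (\<lambda>n. n + 1) ` {n. a n \<noteq> gzero M n}"
  proof
    fix n assume "n \<in> {n. fx M a n \<noteq> gzero M n}"
    then have "a (n - 1) \<noteq> gzero M (n - 1)"
      using gx_zero[OF gm, of "n - 1"] by (auto simp: fx_def)
    then show "n \<in> (\<lambda>n. n + 1) ` {n. a n \<noteq> gzero M n}"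
      by (intro image_eqI[of _ _ "n - 1"]) auto
  qed
  then show ?thesis using assms by (auto simp: elems_iff fx_V[OF gm] intro: finite_subset)
qed

lemma fxpow_elems: "a \<in> elems M \<Longrightarrow> (fx M ^^ i) a \<in> elems M"
  by (induction i) (auto simp: fx_elems)

lemma fsum_elems: "(\<And>i. i < k \<Longrightarrow> f i \<in> elems M) \<Longrightarrow> fsum M f k \<in> elems M"
  by (induction k) (auto simp: fzero_elems fadd_elems)

lemma act_elems: assumes "h \<in> elems M" shows "act M t h \<in> elems M"
proof -
  have "\<And>i. fsm M (coeff t i) ((fx M ^^ i) h) \<in> elems M" by (intro fsm_elems fxpow_elems assms)
  then show ?thesis unfolding act_def by (intro fsum_elems)
qed

lemma gxi_in: "m \<in> gcomp M n \<Longrightarrow> gxi M j n m \<in> gcomp M (n + int j)"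
proof (induction j)
  case 0 thus ?case by simp
next
  case (Suc j)
  then have "gx M (n + int j) (gxi M j n m) \<in> gcomp M (n + int j + 1)" by (intro gx_in[OF gm]) simp
  moreover have eq: "n + int (Suc j) = n + int j + 1" by simp
  ultimately show ?case by (simp only: gxi.simps eq)
qed

lemma gxi_zero: "gxi M j n (gzero M n) = gzero M (n + int j)"
proof (induction j)
  case 0 thus ?case by simp
next
  case (Suc j)
  have eq: "n + int (Suc j) = n + int j + 1" by simp
  show ?case using Suc gx_zero[OF gm, of "n + int j"] by (simp only: gxi.simps eq)
qed

lemma fxpow_zero_iff: "(fx M ^^ j) h = fzero M \<longleftrightarrow> (\<forall>n. gxi M j n (h n) = gzero M (n + int j))"
proof
  assume a: "(fx M ^^ j) h = fzero M"
  show "\<forall>n. gxi M j n (h n) = gzero M (n + int j)"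
  proof
    fix n
    have "(fx M ^^ j) h (n + int j) = fzero M (n + int j)" using a by simp
    then show "gxi M j n (h n) = gzero M (n + int j)" by (simp add: fxpow_eval fzero_def)
  qed
next
  assume a: "\<forall>n. gxi M j n (h n) = gzero M (n + int j)"
  show "(fx M ^^ j) h = fzero M"
  proof
    fix n
    show "(fx M ^^ j) h n = fzero M n"
      using a[rule_format, of "n - int j"] by (simp add: fxpow_eval fzero_def)
  qed
qed

lemma single_elems: "m \<in> gcomp M n \<Longrightarrow> single M n m \<in> elems M"
proof -
  assume m: "m \<in> gcomp M n"
  have "{k. single M n m k \<noteq> gzero M k} \<subseteq> {n}" by (auto simp: single_def)
  then show ?thesis using m gzero_in[OF gm] by (auto simp: elems_iff Vs_def single_def intro: finite_subset)
qed

lemma fxpow_single_iff: "(fx M ^^ j) (single M n m) = fzero M \<longleftrightarrow> gxi M j n m = gzero M (n + int j)"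
  unfolding fxpow_zero_iff
  by (auto simp: single_def gxi_zero split: if_splits)

lemma fzero_Gamma: "fzero M \<in> Gamma M"
  unfolding Gamma_def using fzero_elems fx_zero[OF gm] by (auto intro!: exI[of _ 1])

lemma kill_mono: assumes "kill M e" "e \<le> e'" shows "kill M e'"
  unfolding kill_def
proof
  fix h assume h: "h \<in> Gamma M"
  have "(fx M ^^ e') h = (fx M ^^ (e' - e + e)) h" using assms(2) by simp
  also have "\<dots> = (fx M ^^ (e' - e)) ((fx M ^^ e) h)" by (simp only: funpow_add comp_apply)
  also have "\<dots> = fzero M" using assms(1) h by (simp add: kill_def fxpow_zero[OF gm])
  finally show "(fx M ^^ e') h = fzero M" .
qed

lemma HSL_le_iff: "HSL M \<le> enat e \<longleftrightarrow> kill M e"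
proof
  assume a: "HSL M \<le> enat e"
  then have ex: "\<exists>e. kill M e" by (auto simp: HSL_def kill_def split: if_splits)
  then have "HSL M = enat (LEAST e. kill M e)" by (simp add: HSL_def kill_def)
  then have "(LEAST e. kill M e) \<le> e" using a by simp
  moreover have "kill M (LEAST e. kill M e)" using ex by (rule LeastI_ex)
  ultimately show "kill M e" using kill_mono by blast
next
  assume a: "kill M e"
  then have "HSL M = enat (LEAST e. kill M e)" by (auto simp: HSL_def kill_def)
  then show "HSL M \<le> enat e" using a by (simp add: Least_le)
qed

lemma Gamma_kill: assumes "kill M e"
  shows "Gamma M = {h \<in> elems M. (fx M ^^ Suc e) h = fzero M}"
proof
  show "Gamma M \<subseteq> {h \<in> elems M. (fx M ^^ Suc e) h = fzero M}"
    using kill_mono[OF assms, of "Suc e"] by (auto simp: kill_def Gamma_def)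
  show "{h \<in> elems M. (fx M ^^ Suc e) h = fzero M} \<subseteq> Gamma M"
    by (auto simp: Gamma_def)
qed

lemma xtf_iff: "x_torsion_free M \<longleftrightarrow> kill M 0"
  using fzero_Gamma by (auto simp: x_torsion_free_def kill_def)

end


lemma nth_default_map_upt: "nth_default 0 (map f [0..<L]) n = (if n < L then f n else 0)"
  by (simp add: nth_default_def)

lemma coeff_skmul: assumes "p > 0"
  shows "coeff (skmul p a b) n = (\<Sum>i\<le>n. coeff a i * coeff b (n - i) ^ (p ^ i))"
proof (cases "n < degree a + degree b + 1")
  case True thus ?thesis by (simp only: skmul_def coeff_Poly_eq nth_default_map_upt if_True)
next
  case False
  have "(\<Sum>i\<le>n. coeff a i * coeff b (n - i) ^ (p ^ i)) = 0"
  proof (intro sum.neutral ballI)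
    fix i assume "i \<in> {..n}"
    show "coeff a i * coeff b (n - i) ^ (p ^ i) = 0"
    proof (cases "i \<le> degree a")
      case True
      then have "coeff b (n - i) = 0" using False by (intro coeff_eq_0) simp
      then show ?thesis using assms by (simp add: power_0_left)
    next
      case False then show ?thesis by (simp add: coeff_eq_0)
    qed
  qed
  then show ?thesis using False by (simp only: skmul_def coeff_Poly_eq nth_default_map_upt if_False)
qed

context
  fixes p :: nat
  assumes pp: "prime p" and ch: "CHAR('r::comm_ring_1) = p"
begin

lemma p_pos: "p > 0" using pp prime_gt_0_nat by blast

lemma frob: "((x::'r) + y) ^ (p ^ i) = x ^ (p ^ i) + y ^ (p ^ i)"
  by (rule freshmans_dream') (use pp ch in simp_all)

lemma skmul_add_r: "skmul p t (a + b) = skmul p t a + skmul p (t::'r poly) b"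
  by (simp add: poly_eq_iff coeff_skmul p_pos frob distrib_left sum.distrib)

lemma skmul_add_l: "skmul p (a + b) t = skmul p a t + skmul p (b::'r poly) t"
  by (simp add: poly_eq_iff coeff_skmul p_pos distrib_right sum.distrib)

lemma skmul_0_r: "skmul p t (0::'r poly) = 0"
  using p_pos by (simp add: poly_eq_iff coeff_skmul power_0_left)

lemma skmul_0_l: "skmul p (0::'r poly) t = 0"
  by (simp add: poly_eq_iff coeff_skmul p_pos power_0_left)

lemma graded_ideal_zero: "graded_ideal p {0::'r poly}"
  by (simp add: graded_ideal_def skmul_0_r skmul_0_l)

lemma graded_ideal_sum:
  assumes "graded_ideal p I" "graded_ideal p (J::'r poly set)"
  shows "graded_ideal p {a + b | a b. a \<in> I \<and> b \<in> J}"
proof -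
  have I: "0 \<in> I" "\<And>a b. a \<in> I \<Longrightarrow> b \<in> I \<Longrightarrow> a + b \<in> I" "\<And>a. a \<in> I \<Longrightarrow> - a \<in> I"
     "\<And>a t. a \<in> I \<Longrightarrow> skmul p t a \<in> I" "\<And>a t. a \<in> I \<Longrightarrow> skmul p a t \<in> I"
     "\<And>a n. a \<in> I \<Longrightarrow> monom (coeff a n) n \<in> I"
    using assms(1) unfolding graded_ideal_def by blast+
  have J: "0 \<in> J" "\<And>a b. a \<in> J \<Longrightarrow> b \<in> J \<Longrightarrow> a + b \<in> J" "\<And>a. a \<in> J \<Longrightarrow> - a \<in> J"
     "\<And>a t. a \<in> J \<Longrightarrow> skmul p t a \<in> J" "\<And>a t. a \<in> J \<Longrightarrow> skmul p a t \<in> J"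
     "\<And>a n. a \<in> J \<Longrightarrow> monom (coeff a n) n \<in> J"
    using assms(2) unfolding graded_ideal_def by blast+
  let ?S = "{a + b | a b. a \<in> I \<and> b \<in> J}"
  have "0 \<in> ?S" using I(1) J(1) by force
  moreover have "\<forall>x\<in>?S. \<forall>y\<in>?S. x + y \<in> ?S"
  proof (intro ballI)
    fix x y assume "x \<in> ?S" "y \<in> ?S"
    then obtain a b c d where "x = a + b" "y = c + d" "a \<in> I" "b \<in> J" "c \<in> I" "d \<in> J" by blast
    then have "x + y = (a + c) + (b + d)" "a + c \<in> I" "b + d \<in> J" using I J by (auto simp: ac_simps)
    then show "x + y \<in> ?S" by blast
  qed
  moreover have "\<forall>x\<in>?S. - x \<in> ?S"
  proof
    fix x assume "x \<in> ?S"
    then obtain a b where "x = a + b" "a \<in> I" "b \<in> J" by blast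
    then have "- x = (- a) + (- b)" "- a \<in> I" "- b \<in> J" using I J by auto
    then show "- x \<in> ?S" by blast
  qed
  moreover have "\<forall>x\<in>?S. \<forall>t. skmul p t x \<in> ?S \<and> skmul p x t \<in> ?S"
  proof (intro ballI allI conjI)
    fix x t assume "x \<in> ?S"
    then obtain a b where ab: "x = a + b" "a \<in> I" "b \<in> J" by blast
    have "skmul p t x = skmul p t a + skmul p t b" using ab by (simp add: skmul_add_r)
    moreover have "skmul p t a \<in> I" "skmul p t b \<in> J" using ab I(4) J(4) by auto
    ultimately show "skmul p t x \<in> ?S" by blast
    have "skmul p x t = skmul p a t + skmul p b t" using ab by (simp add: skmul_add_l)
    moreover have "skmul p a t \<in> I" "skmul p b t \<in> J" using ab I(5) J(5) by auto
    ultimately show "skmul p x t \<in> ?S" by blast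
  qed
  moreover have "\<forall>x\<in>?S. \<forall>n. monom (coeff x n) n \<in> ?S"
  proof (intro ballI allI)
    fix x n assume "x \<in> ?S"
    then obtain a b where ab: "x = a + b" "a \<in> I" "b \<in> J" by blast
    have "monom (coeff x n) n = monom (coeff a n) n + monom (coeff b n) n"
      using ab by (simp add: add_monom)
    moreover have "monom (coeff a n) n \<in> I" "monom (coeff b n) n \<in> J" using ab I(6) J(6) by auto
    ultimately show "monom (coeff x n) n \<in> ?S" by blast
  qed
  ultimately show ?thesis unfolding graded_ideal_def by - (intro conjI; assumption)
qed

lemma graded_ideal_INT: assumes h: "\<And>l. graded_ideal p (B l)" shows "graded_ideal p (\<Inter>l. B l :: 'r poly set)"
proof -
  have "0 \<in> B l" "\<And>a b. a \<in> B l \<Longrightarrow> b \<in> B l \<Longrightarrow> a + b \<in> B l" "\<And>a. a \<in> B l \<Longrightarrow> - a \<in> B l"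
     "\<And>a t. a \<in> B l \<Longrightarrow> skmul p t a \<in> B l" "\<And>a t. a \<in> B l \<Longrightarrow> skmul p a t \<in> B l"
     "\<And>a n. a \<in> B l \<Longrightarrow> monom (coeff a n) n \<in> B l" for l
    using h[of l] unfolding graded_ideal_def by blast+
  then show ?thesis unfolding graded_ideal_def by simp
qed

definition annih :: "('r, 'm) gmod \<Rightarrow> (int \<Rightarrow> 'm) set \<Rightarrow> 'r poly set \<Rightarrow> bool" where
  "annih M N I \<longleftrightarrow> (\<forall>t\<in>I. \<forall>h\<in>N. act M t h = fzero M)"

lemma grann_eqI:
  assumes "graded_ideal p G" "annih M N G" "\<And>I. graded_ideal p I \<Longrightarrow> annih M N I \<Longrightarrow> I \<subseteq> G"
  shows "grann p M N = G"
  unfolding grann_def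
proof (rule Greatest_equality)
  show "graded_ideal p G \<and> (\<forall>t\<in>G. \<forall>h\<in>N. act M t h = fzero M)" using assms(1,2) unfolding annih_def by blast
  fix y assume "graded_ideal p y \<and> (\<forall>t\<in>y. \<forall>h\<in>N. act M t h = fzero M)"
  then show "y \<le> G" using assms(3) unfolding annih_def by blast
qed

lemma grann_exists:
  assumes gm: "is_gmod p (M :: ('r, 'm) gmod)" and N: "N \<subseteq> Vs M"
  shows "graded_ideal p (grann p M N) \<and> annih M N (grann p M N)
     \<and> (\<forall>I. graded_ideal p I \<and> annih M N I \<longrightarrow> I \<subseteq> grann p M N)"
proof -
  let ?U = "\<Union>{I. graded_ideal p I \<and> annih M N I}"
  have Z: "graded_ideal p {0::'r poly} \<and> annih M N {0}"
    using graded_ideal_zero act_zero_t[OF gm] N by (auto simp: annih_def)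
  have sum: "\<exists>K. graded_ideal p K \<and> annih M N K \<and> a + b \<in> K"
    if "graded_ideal p I" "annih M N I" "a \<in> I" "graded_ideal p J" "annih M N J" "b \<in> J" for I J a b
  proof (intro exI conjI)
    show "graded_ideal p {a + b | a b. a \<in> I \<and> b \<in> J}" by (rule graded_ideal_sum) fact+
    show "a + b \<in> {a + b | a b. a \<in> I \<and> b \<in> J}" using that by blast
    show "annih M N {a + b | a b. a \<in> I \<and> b \<in> J}"
      unfolding annih_def
    proof (intro ballI)
      fix t h assume t: "t \<in> {a + b | a b. a \<in> I \<and> b \<in> J}" and h: "h \<in> N"
      then obtain a' b' where "t = a' + b'" "a' \<in> I" "b' \<in> J" by blast
      then show "act M t h = fzero M"
        using act_add_t[OF gm, of h a' b'] h N that(2,5) fzz[OF gm]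
        by (auto simp: annih_def)
    qed
  qed
  have GU: "graded_ideal p ?U"
  proof -
    have "0 \<in> ?U" using Z by blast
    moreover have "\<forall>a\<in>?U. \<forall>b\<in>?U. a + b \<in> ?U" using sum by blast
    moreover have "\<forall>a\<in>?U. - a \<in> ?U" unfolding graded_ideal_def by blast
    moreover have "\<forall>a\<in>?U. \<forall>t. skmul p t a \<in> ?U \<and> skmul p a t \<in> ?U" unfolding graded_ideal_def by blast
    moreover have "\<forall>a\<in>?U. \<forall>n. monom (coeff a n) n \<in> ?U" unfolding graded_ideal_def by blast
    ultimately show ?thesis unfolding graded_ideal_def by - (intro conjI; assumption)
  qed
  have AU: "annih M N ?U" unfolding annih_def by blast
  have eq: "grann p M N = ?U" by (rule grann_eqI[OF GU AU]) blast
  show ?thesis unfolding eq using GU AU by blast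
qed

end


lemma gprod_sel [simp]:
  "gcomp (gprod H) n = {v. \<forall>l. v l \<in> gcomp (H l) n}"
  "gzero (gprod H) n = (\<lambda>l. gzero (H l) n)"
  "gadd (gprod H) n v w = (\<lambda>l. gadd (H l) n (v l) (w l))"
  "gneg (gprod H) n v = (\<lambda>l. gneg (H l) n (v l))"
  "gsmult (gprod H) n r v = (\<lambda>l. gsmult (H l) n r (v l))"
  "gx (gprod H) n v = (\<lambda>l. gx (H l) n (v l))"
  by (simp_all add: gprod_def)

definition prj :: "(int \<Rightarrow> 'l \<Rightarrow> 'm) \<Rightarrow> 'l \<Rightarrow> int \<Rightarrow> 'm" where
  "prj h l = (\<lambda>n. h n l)"

definition emb :: "('l \<Rightarrow> ('r, 'm) gmod) \<Rightarrow> 'l \<Rightarrow> (int \<Rightarrow> 'm) \<Rightarrow> int \<Rightarrow> 'l \<Rightarrow> 'm" where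
  "emb H l k = (\<lambda>n l'. if l' = l then k n else gzero (H l') n)"

lemma prj_eq_iff: "h = k \<longleftrightarrow> (\<forall>l. prj h l = prj k l)"
  by (auto simp: prj_def fun_eq_iff)

lemma prj_fzero [simp]: "prj (fzero (gprod H)) l = fzero (H l)"
  by (simp add: prj_def fzero_def)
lemma prj_fadd [simp]: "prj (fadd (gprod H) a b) l = fadd (H l) (prj a l) (prj b l)"
  by (simp add: prj_def fadd_def)
lemma prj_fsm [simp]: "prj (fsm (gprod H) r a) l = fsm (H l) r (prj a l)"
  by (simp add: prj_def fsm_def)
lemma prj_fx [simp]: "prj (fx (gprod H) a) l = fx (H l) (prj a l)"
  by (simp add: prj_def fx_def)
lemma prj_fxpow [simp]: "prj ((fx (gprod H) ^^ i) a) l = (fx (H l) ^^ i) (prj a l)"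
  by (induction i) simp_all
lemma prj_fsum: "prj (fsum (gprod H) f k) l = fsum (H l) (\<lambda>i. prj (f i) l) k"
  by (induction k) simp_all
lemma prj_act [simp]: "prj (act (gprod H) t h) l = act (H l) t (prj h l)"
  by (simp add: act_def prj_fsum)

lemma gxi_gprod: "gxi (gprod H) j n v = (\<lambda>l. gxi (H l) j n (v l))"
  by (induction j) simp_all

lemma prj_emb: "prj (emb H l k) l' = (if l' = l then k else fzero (H l'))"
  by (simp add: prj_def emb_def fzero_def fun_eq_iff)

lemma emb_fzero: "emb H l (fzero (H l)) = fzero (gprod H)"
  by (simp add: emb_def fzero_def fun_eq_iff)

lemma prj_elems: "h \<in> elems (gprod H) \<Longrightarrow> prj h l \<in> elems (H l)"
proof -
  assume h: "h \<in> elems (gprod H)"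
  have "{n. prj h l n \<noteq> gzero (H l) n} \<subseteq> {n. h n \<noteq> gzero (gprod H) n}"
    by (auto simp: prj_def)
  then show ?thesis using h by (auto simp: elems_def prj_def intro: finite_subset)
qed

context
  fixes p :: nat and H :: "'l \<Rightarrow> ('r::comm_ring_1, 'm) gmod"
  assumes gmH: "\<And>l. is_gmod p (H l)"
begin

lemma gsm_mult: "a \<in> gcomp M n \<Longrightarrow> is_gmod p M \<Longrightarrow> gsmult M n (r * s) a = gsmult M n r (gsmult M n s a)"
  unfolding is_gmod_def Let_def by blast
lemma gsm_one: "a \<in> gcomp M n \<Longrightarrow> is_gmod p M \<Longrightarrow> gsmult M n 1 a = a"
  unfolding is_gmod_def Let_def by blast
lemma gx_sm: "a \<in> gcomp M n \<Longrightarrow> is_gmod p M \<Longrightarrow> gx M n (gsmult M n r a) = gsmult M (n + 1) (r ^ p) (gx M n a)"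
  unfolding is_gmod_def Let_def by blast

lemma is_gmod_gprod: "is_gmod p (gprod H)"
  unfolding is_gmod_def Let_def gprod_sel
proof (intro allI conjI ballI)
  fix n
  show "(\<lambda>l. gzero (H l) n) \<in> {v. \<forall>l. v l \<in> gcomp (H l) n}" using gzero_in[OF gmH] by simp
  fix a assume a: "a \<in> {v. \<forall>l. v l \<in> gcomp (H l) n}"
  then have a': "\<And>l. a l \<in> gcomp (H l) n" by simp
  show "(\<lambda>l. gneg (H l) n (a l)) \<in> {v. \<forall>l. v l \<in> gcomp (H l) n}" using gneg_in[OF gmH a'] by simp
  show "(\<lambda>l. gx (H l) n (a l)) \<in> {v. \<forall>l. v l \<in> gcomp (H l) (n + 1)}" using gx_in[OF gmH a'] by simp
  show "(\<lambda>l. gadd (H l) n (gzero (H l) n) (a l)) = a" using glid[OF gmH a'] by simp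
  show "(\<lambda>l. gadd (H l) n (gneg (H l) n (a l)) (a l)) = (\<lambda>l. gzero (H l) n)" using glinv[OF gmH a'] by simp
  show "(\<lambda>l. gsmult (H l) n 1 (a l)) = a" using gsm_one[OF a' gmH] by simp
  fix r
  show "(\<lambda>l. gsmult (H l) n r (a l)) \<in> {v. \<forall>l. v l \<in> gcomp (H l) n}" using gsm_in[OF gmH a'] by simp
  show "(\<lambda>l. gx (H l) n (gsmult (H l) n r (a l))) = (\<lambda>l. gsmult (H l) (n + 1) (r ^ p) (gx (H l) n (a l)))"
    using gx_sm[OF a' gmH] by simp
next
  fix n a b assume a: "a \<in> {v. \<forall>l. v l \<in> gcomp (H l) n}" and b: "b \<in> {v. \<forall>l. v l \<in> gcomp (H l) n}"
  then have a': "\<And>l. a l \<in> gcomp (H l) n" and b': "\<And>l. b l \<in> gcomp (H l) n" by simp_all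
  show "(\<lambda>l. gadd (H l) n (a l) (b l)) \<in> {v. \<forall>l. v l \<in> gcomp (H l) n}" using gadd_in[OF gmH a' b'] by simp
  show "(\<lambda>l. gadd (H l) n (a l) (b l)) = (\<lambda>l. gadd (H l) n (b l) (a l))" using gcomm[OF gmH a' b'] by simp
  show "(\<lambda>l. gx (H l) n (gadd (H l) n (a l) (b l))) = (\<lambda>l. gadd (H l) (n + 1) (gx (H l) n (a l)) (gx (H l) n (b l)))"
    using gx_add[OF gmH a' b'] by simp
  fix r
  show "(\<lambda>l. gsmult (H l) n r (gadd (H l) n (a l) (b l))) = (\<lambda>l. gadd (H l) n (gsmult (H l) n r (a l)) (gsmult (H l) n r (b l)))"
    using gsm_add[OF gmH a' b'] by simp
next
  fix n a r s assume a: "a \<in> {v. \<forall>l. v l \<in> gcomp (H l) n}"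
  then have a': "\<And>l. a l \<in> gcomp (H l) n" by simp
  show "(\<lambda>l. gsmult (H l) n (r + s) (a l)) = (\<lambda>l. gadd (H l) n (gsmult (H l) n r (a l)) (gsmult (H l) n s (a l)))"
    using gadd_sm[OF gmH a'] by simp
  show "(\<lambda>l. gsmult (H l) n (r * s) (a l)) = (\<lambda>l. gsmult (H l) n r (gsmult (H l) n s (a l)))"
    using gsm_mult[OF a' gmH] by simp
next
  fix n a b c assume a: "a \<in> {v. \<forall>l. v l \<in> gcomp (H l) n}" and b: "b \<in> {v. \<forall>l. v l \<in> gcomp (H l) n}"
    and c: "c \<in> {v. \<forall>l. v l \<in> gcomp (H l) n}"
  then have a': "\<And>l. a l \<in> gcomp (H l) n" and b': "\<And>l. b l \<in> gcomp (H l) n" and c': "\<And>l. c l \<in> gcomp (H l) n" by simp_all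
  show "(\<lambda>l. gadd (H l) n (gadd (H l) n (a l) (b l)) (c l)) = (\<lambda>l. gadd (H l) n (a l) (gadd (H l) n (b l) (c l)))"
    using gassoc[OF gmH a' b' c'] by simp
qed

lemma emb_elems: assumes k: "k \<in> elems (H l)" shows "emb H l k \<in> elems (gprod H)"
proof -
  have "{n. emb H l k n \<noteq> gzero (gprod H) n} \<subseteq> {n. k n \<noteq> gzero (H l) n}"
    by (auto simp: emb_def fun_eq_iff)
  moreover have "\<forall>n. emb H l k n \<in> gcomp (gprod H) n"
    using k gzero_in[OF gmH] by (auto simp: emb_def elems_def)
  ultimately show ?thesis using k by (auto simp: elems_def intro: finite_subset)
qed

lemma fxpow_emb: "(fx (gprod H) ^^ j) (emb H l k) = emb H l ((fx (H l) ^^ j) k)"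
  unfolding prj_eq_iff by (simp add: prj_emb fxpow_zero[OF gmH])

end


inductive_set sumset :: "('r::comm_ring_1, 'm) gmod \<Rightarrow> ('l \<Rightarrow> (int \<Rightarrow> 'm) set) \<Rightarrow> (int \<Rightarrow> 'm) set"
  for M NN where
  sz: "fzero M \<in> sumset M NN"
| sN: "h \<in> NN l \<Longrightarrow> h \<in> sumset M NN"
| sA: "a \<in> sumset M NN \<Longrightarrow> b \<in> sumset M NN \<Longrightarrow> fadd M a b \<in> sumset M NN"

lemma elems_Vs: "elems M \<subseteq> Vs M" by (auto simp: elems_def Vs_def)

lemma submodD:
  assumes "submod M N"
  shows "N \<subseteq> elems M" "fzero M \<in> N" "\<And>h k. h \<in> N \<Longrightarrow> k \<in> N \<Longrightarrow> fadd M h k \<in> N"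
    "\<And>t h. h \<in> N \<Longrightarrow> act M t h \<in> N"
  using assms unfolding submod_def by blast+

context
  fixes p :: nat
  assumes pp: "prime p" and ch: "CHAR('r::comm_ring_1) = p"
begin

lemmas annih_iff = annih_def[OF pp ch]

lemma grann_props:
  assumes gm: "is_gmod p (M :: ('r, 'm) gmod)" and N: "submod M N"
  shows "graded_ideal p (grann p M N)" "annih M N (grann p M N)"
    "\<And>I. graded_ideal p I \<Longrightarrow> annih M N I \<Longrightarrow> I \<subseteq> grann p M N"
proof -
  have "N \<subseteq> Vs M" using submodD(1)[OF N] elems_Vs by blast
  from grann_exists[OF pp ch gm this] show "graded_ideal p (grann p M N)" "annih M N (grann p M N)"
    "\<And>I. graded_ideal p I \<Longrightarrow> annih M N I \<Longrightarrow> I \<subseteq> grann p M N" by blast+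
qed

lemma annih_mono: "annih (M :: ('r, 'm) gmod) N I \<Longrightarrow> J \<subseteq> I \<Longrightarrow> N' \<subseteq> N \<Longrightarrow> annih M N' J"
  by (auto simp: annih_iff)

lemma Gset_INT:
  assumes gm: "is_gmod p (M :: ('r, 'm) gmod)" and B: "\<forall>l::'l. B l \<in> Gset p M"
  shows "(\<Inter>l. B l) \<in> Gset p M"
proof -
  have "\<forall>l. \<exists>N. submod M N \<and> B l = grann p M N" using B unfolding Gset_def by blast
  from choice[OF this] obtain NN where NN0: "\<forall>l. submod M (NN l) \<and> B l = grann p M (NN l)" by blast
  then have NN: "\<And>l. submod M (NN l) \<and> B l = grann p M (NN l)" by blast
  let ?S = "sumset M NN"
  have S_el: "h \<in> elems M" if "h \<in> ?S" for h
    using that by induction (use NN submodD fzero_elems[OF gm] fadd_elems[OF gm] in blast)+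
  have S_act: "act M t h \<in> ?S" if "h \<in> ?S" for h t
    using that
  proof induction
    case sz then show ?case using act_zero_h[OF gm] sumset.sz by metis
  next
    case (sN h l) then show ?case using NN submodD(4) sumset.sN by metis
  next
    case (sA a b)
    have va: "a \<in> Vs M" "b \<in> Vs M" using S_el[OF sA.hyps(1)] S_el[OF sA.hyps(2)] elems_Vs by blast+
    have "act M t (fadd M a b) = fadd M (act M t a) (act M t b)"
      by (rule act_add_h[OF gm va])
    then show ?case using sumset.sA[OF sA.IH(1) sA.IH(2)] by simp
  qed
  have subS: "submod M ?S"
    unfolding submod_def using S_el S_act sumset.sz sumset.sA by blast
  have G: "graded_ideal p (\<Inter>l. B l)"
    by (rule graded_ideal_INT[OF pp ch]) (use NN grann_props(1)[OF gm] in metis)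
  have A: "annih M ?S (\<Inter>l. B l)"
    unfolding annih_iff
  proof (intro ballI)
    fix t h assume t: "t \<in> (\<Inter>l. B l)" and h: "h \<in> ?S"
    from h show "act M t h = fzero M"
    proof induction
      case sz then show ?case using act_zero_h[OF gm] by metis
    next
      case (sN h l)
      have "t \<in> grann p M (NN l)" using t NN by blast
      then show ?case using grann_props(2)[OF gm, of "NN l"] NN sN unfolding annih_iff by blast
    next
      case (sA a b)
      have va: "a \<in> Vs M" "b \<in> Vs M" using S_el[OF sA.hyps(1)] S_el[OF sA.hyps(2)] elems_Vs by blast+
      have "act M t (fadd M a b) = fadd M (act M t a) (act M t b)"
        by (rule act_add_h[OF gm va])
      then show ?case using sA.IH fzz[OF gm] by simp
    qed
  qed
  have eq: "grann p M ?S = (\<Inter>l. B l)"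
  proof (rule grann_eqI[OF pp ch G A])
    fix I assume I: "graded_ideal p I" "annih M ?S I"
    show "I \<subseteq> (\<Inter>l. B l)"
    proof
      fix t assume t: "t \<in> I"
      show "t \<in> (\<Inter>l. B l)"
      proof
        fix l
        have "NN l \<subseteq> ?S" by (rule subsetI) (rule sumset.sN)
        then have "annih M (NN l) I" by (rule annih_mono[OF I(2) order_refl])
        then have "I \<subseteq> grann p M (NN l)" by (rule grann_props(3)[OF gm conjunct1[OF NN] I(1)])
        then show "t \<in> B l" using conjunct2[OF NN] t by auto
      qed
    qed
  qed
  show ?thesis unfolding Gset_def mem_Collect_eq
    by (rule exI[of _ ?S], rule conjI, rule eq[symmetric], rule subS)
qed

end


lemma enat_eq_by_le: fixes x y :: enat assumes "\<And>e. x \<le> enat e \<longleftrightarrow> y \<le> enat e" shows "x = y"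
proof (rule antisym)
  show "x \<le> y"
  proof (cases y)
    case (enat b) then show ?thesis using assms[of b] by simp
  qed simp
  show "y \<le> x"
  proof (cases x)
    case (enat b) then show ?thesis using assms[of b] by simp
  qed simp
qed

context
  fixes p :: nat and H :: "'l \<Rightarrow> ('r::comm_ring_1, 'm) gmod"
  assumes pp: "prime p" and ch: "CHAR('r) = p" and gmH: "\<And>l. is_gmod p (H l)"
begin

lemmas annih_iff' = annih_def[OF pp ch]

lemma gmP: "is_gmod p (gprod H)" by (rule is_gmod_gprod[OF gmH])

lemma submod_prj: assumes N: "submod (gprod H) N" shows "submod (H l) ((\<lambda>h. prj h l) ` N)"
  unfolding submod_def
proof (intro conjI ballI allI)
  show "(\<lambda>h. prj h l) ` N \<subseteq> elems (H l)" using submodD(1)[OF N] prj_elems[of _ H l] by blast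
  have "prj (fzero (gprod H)) l \<in> (\<lambda>h. prj h l) ` N" using submodD(2)[OF N] by (rule imageI)
  then show "fzero (H l) \<in> (\<lambda>h. prj h l) ` N" by simp
next
  fix h k assume "h \<in> (\<lambda>h. prj h l) ` N" "k \<in> (\<lambda>h. prj h l) ` N"
  then obtain h' k' where hk: "h = prj h' l" "k = prj k' l" "h' \<in> N" "k' \<in> N" by blast
  have "prj (fadd (gprod H) h' k') l \<in> (\<lambda>h. prj h l) ` N" using submodD(3)[OF N hk(3,4)] by (rule imageI)
  then show "fadd (H l) h k \<in> (\<lambda>h. prj h l) ` N" using hk by simp
next
  fix t h assume "h \<in> (\<lambda>h. prj h l) ` N"
  then obtain h' where hk: "h = prj h' l" "h' \<in> N" by blast
  have "prj (act (gprod H) t h') l \<in> (\<lambda>h. prj h l) ` N" using submodD(4)[OF N hk(2)] by (rule imageI)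
  then show "act (H l) t h \<in> (\<lambda>h. prj h l) ` N" using hk by simp
qed

lemma annih_prj: "annih (gprod H) N I \<longleftrightarrow> (\<forall>l. annih (H l) ((\<lambda>h. prj h l) ` N) I)"
proof -
  have "\<And>t h. act (gprod H) t h = fzero (gprod H) \<longleftrightarrow> (\<forall>l. act (H l) t (prj h l) = fzero (H l))"
    by (subst prj_eq_iff) simp
  then show ?thesis unfolding annih_iff' by blast
qed

lemma grann_prod: assumes N: "submod (gprod H) N"
  shows "grann p (gprod H) N = (\<Inter>l. grann p (H l) ((\<lambda>h. prj h l) ` N))"
proof (rule grann_eqI[OF pp ch])
  have sp: "\<And>l. submod (H l) ((\<lambda>h. prj h l) ` N)" by (rule submod_prj[OF N])
  show "graded_ideal p (\<Inter>l. grann p (H l) ((\<lambda>h. prj h l) ` N))"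
    by (rule graded_ideal_INT[OF pp ch], rule grann_props(1)[OF pp ch gmH sp])
  show "annih (gprod H) N (\<Inter>l. grann p (H l) ((\<lambda>h. prj h l) ` N))"
    unfolding annih_prj
  proof
    fix l
    show "annih (H l) ((\<lambda>h. prj h l) ` N) (\<Inter>l. grann p (H l) ((\<lambda>h. prj h l) ` N))"
      by (rule annih_mono[OF pp ch grann_props(2)[OF pp ch gmH sp]]) auto
  qed
  fix I assume I: "graded_ideal p I" "annih (gprod H) N I"
  have "\<And>l. I \<subseteq> grann p (H l) ((\<lambda>h. prj h l) ` N)"
    using grann_props(3)[OF pp ch gmH sp I(1)] I(2) unfolding annih_prj by blast
  then show "I \<subseteq> (\<Inter>l. grann p (H l) ((\<lambda>h. prj h l) ` N))" by blast
qed

lemma Gset_gprod: "Gset p (gprod H) = {\<Inter>l. B l | B. \<forall>l. B l \<in> Gset p (H l)}"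
proof
  show "Gset p (gprod H) \<subseteq> {\<Inter>l. B l | B. \<forall>l. B l \<in> Gset p (H l)}"
  proof
    fix X assume "X \<in> Gset p (gprod H)"
    then obtain N where N: "submod (gprod H) N" "X = grann p (gprod H) N" unfolding Gset_def by blast
    have "X = (\<Inter>l. grann p (H l) ((\<lambda>h. prj h l) ` N))" using N grann_prod by simp
    moreover have "\<forall>l. grann p (H l) ((\<lambda>h. prj h l) ` N) \<in> Gset p (H l)"
      using submod_prj[OF N(1)] unfolding Gset_def by blast
    ultimately show "X \<in> {\<Inter>l. B l | B. \<forall>l. B l \<in> Gset p (H l)}" by blast
  qed
next
  show "{\<Inter>l. B l | B. \<forall>l. B l \<in> Gset p (H l)} \<subseteq> Gset p (gprod H)"
  proof
    fix X assume "X \<in> {\<Inter>l. B l | B. \<forall>l. B l \<in> Gset p (H l)}"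
    then obtain B where X: "X = (\<Inter>l. B l)" and B: "\<forall>l. B l \<in> Gset p (H l)" by blast
    have "\<forall>l. \<exists>N. submod (H l) N \<and> B l = grann p (H l) N" using B unfolding Gset_def by blast
    from choice[OF this] obtain NN where NN0: "\<forall>l. submod (H l) (NN l) \<and> B l = grann p (H l) (NN l)" by blast
    then have NNs: "\<And>l. submod (H l) (NN l)" and NNB: "\<And>l. B l = grann p (H l) (NN l)" by blast+
    define N where "N = {h \<in> elems (gprod H). \<forall>l. prj h l \<in> NN l}"
    have subN: "submod (gprod H) N"
      unfolding submod_def
    proof (intro conjI ballI allI)
      show "N \<subseteq> elems (gprod H)" by (auto simp: N_def)
      show "fzero (gprod H) \<in> N" using fzero_elems[OF gmP] submodD(2)[OF NNs] by (simp add: N_def)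
    next
      fix h k assume "h \<in> N" "k \<in> N"
      then show "fadd (gprod H) h k \<in> N"
        using fadd_elems[OF gmP] submodD(3)[OF NNs] by (simp add: N_def)
    next
      fix t h assume "h \<in> N"
      then show "act (gprod H) t h \<in> N"
        using act_elems[OF gmP] submodD(4)[OF NNs] by (simp add: N_def)
    qed
    have prjN: "(\<lambda>h. prj h l) ` N = NN l" for l
    proof
      show "(\<lambda>h. prj h l) ` N \<subseteq> NN l" by (auto simp: N_def)
      show "NN l \<subseteq> (\<lambda>h. prj h l) ` N"
      proof
        fix k assume k: "k \<in> NN l"
        have ke: "k \<in> elems (H l)" using submodD(1)[OF NNs] k by blast
        have "emb H l k \<in> N"
          unfolding N_def using emb_elems[where p=p and H=H, OF gmH ke] k submodD(2)[OF NNs] by (simp add: prj_emb)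
        moreover have "prj (emb H l k) l = k" by (simp add: prj_emb)
        ultimately show "k \<in> (\<lambda>h. prj h l) ` N" by (metis imageI)
      qed
    qed
    have "grann p (gprod H) N = X" using grann_prod[OF subN] by (simp add: prjN X NNB)
    then show "X \<in> Gset p (gprod H)" unfolding Gset_def using subN by blast
  qed
qed

lemma Gset_gprod_const:
  assumes A: "\<forall>l. Gset p (H l) = G'"
  shows "Gset p (gprod H) = G'"
proof -
  have G'eq: "G' = Gset p (H undefined)" using spec[OF A, of undefined] by (rule sym)
  have s1: "X \<in> G'" if "X \<in> {\<Inter>l::'l. B l | B. \<forall>l::'l. B l \<in> G'}" for X
  proof -
    from that obtain B :: "'l \<Rightarrow> 'r poly set" where X: "X = (\<Inter>l. B l)" and B': "\<forall>l. B l \<in> G'"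
      by (auto simp only: mem_Collect_eq)
    have B: "\<forall>l. B l \<in> Gset p (H undefined)" using B' unfolding G'eq .
    have "(\<Inter>l. B l) \<in> Gset p (H undefined)" by (rule Gset_INT[OF pp ch gmH B])
    then show "X \<in> G'" unfolding X G'eq .
  qed
  have s2: "X \<in> {\<Inter>l::'l. B l | B. \<forall>l::'l. B l \<in> G'}" if X: "X \<in> G'" for X
  proof -
    have "X = (\<Inter>l::'l. X)" by simp
    moreover have "\<forall>l::'l. X \<in> G'" using X by simp
    ultimately show ?thesis by (intro CollectI exI[of _ "\<lambda>l. X"]) simp
  qed
  have "{\<Inter>l::'l. B l | B. \<forall>l::'l. B l \<in> G'} = G'" using s1 s2 by blast
  moreover have "{\<Inter>l. B l | B. \<forall>l. B l \<in> Gset p (H l)} = {\<Inter>l::'l. B l | B. \<forall>l::'l. B l \<in> G'}"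
    using A by simp
  ultimately show ?thesis using Gset_gprod by simp
qed

lemma prj_Gamma: "h \<in> Gamma (gprod H) \<Longrightarrow> prj h l \<in> Gamma (H l)"
proof -
  assume h: "h \<in> Gamma (gprod H)"
  then obtain j where j: "j \<ge> 1" "(fx (gprod H) ^^ j) h = fzero (gprod H)" and he: "h \<in> elems (gprod H)"
    unfolding Gamma_def by blast
  have "(fx (H l) ^^ j) (prj h l) = fzero (H l)" using arg_cong[OF j(2), of "\<lambda>h. prj h l"] by simp
  then show ?thesis using j(1) prj_elems[OF he] unfolding Gamma_def by blast
qed

lemma emb_Gamma: "k \<in> Gamma (H l) \<Longrightarrow> emb H l k \<in> Gamma (gprod H)"
proof -
  assume k: "k \<in> Gamma (H l)"
  then obtain j where j: "j \<ge> 1" "(fx (H l) ^^ j) k = fzero (H l)" and ke: "k \<in> elems (H l)"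
    unfolding Gamma_def by blast
  have "(fx (gprod H) ^^ j) (emb H l k) = fzero (gprod H)"
    by (simp add: fxpow_emb[where p=p and H=H, OF gmH] j(2) emb_fzero)
  then show ?thesis using j(1) emb_elems[where p=p and H=H, OF gmH ke] unfolding Gamma_def by blast
qed

lemma kill_gprod: "kill (gprod H) e \<longleftrightarrow> (\<forall>l. kill (H l) e)"
proof
  assume K: "kill (gprod H) e"
  show "\<forall>l. kill (H l) e" unfolding kill_def
  proof (intro allI ballI)
    fix l k assume k: "k \<in> Gamma (H l)"
    have "(fx (gprod H) ^^ e) (emb H l k) = fzero (gprod H)" using K emb_Gamma[OF k] unfolding kill_def by blast
    then have "prj ((fx (gprod H) ^^ e) (emb H l k)) l = fzero (H l)" by simp
    then show "(fx (H l) ^^ e) k = fzero (H l)" by (simp add: prj_emb)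
  qed
next
  assume K: "\<forall>l. kill (H l) e"
  show "kill (gprod H) e" unfolding kill_def
  proof
    fix h assume h: "h \<in> Gamma (gprod H)"
    show "(fx (gprod H) ^^ e) h = fzero (gprod H)"
      unfolding prj_eq_iff using K prj_Gamma[OF h] unfolding kill_def by simp
  qed
qed

lemma HSL_gprod: "HSL (gprod H) = (SUP l. HSL (H l))"
proof (rule enat_eq_by_le)
  fix e
  show "HSL (gprod H) \<le> enat e \<longleftrightarrow> (SUP l. HSL (H l)) \<le> enat e"
    by (simp add: HSL_le_iff[OF gmP] HSL_le_iff[OF gmH] kill_gprod SUP_le_iff)
qed

lemma xtf_gprod: "x_torsion_free (gprod H) \<longleftrightarrow> (\<forall>l. x_torsion_free (H l))"
  by (simp add: xtf_iff[OF gmP] xtf_iff[OF gmH] kill_gprod)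

end


declare gxi.simps(2) [simp del]

lemma gquot_sel [simp]:
  "gcomp (gquot M S) n = coset M S n ` gcomp M n"
  "gzero (gquot M S) n = hom_part M S n"
  "gadd (gquot M S) n A B = {gadd M n a b | a b. a \<in> A \<and> b \<in> B}"
  "gsmult (gquot M S) n r A = {gadd M n (gsmult M n r a) s | a s. a \<in> A \<and> s \<in> hom_part M S n}"
  "gx (gquot M S) n A = {gadd M (n + 1) (gx M n a) s | a s. a \<in> A \<and> s \<in> hom_part M S (n + 1)}"
  by (simp_all add: gquot_def)

lemma gsub_sel [simp]: "gcomp (gsub M S) = hom_part M S" "gzero (gsub M S) = gzero M"
  by (simp_all add: gsub_def)

lemma hom_part_kill:
  assumes gm: "is_gmod p M" and K: "kill M e"
  shows "hom_part M (Gamma M) n = {m \<in> gcomp M n. gxi M (Suc e) n m = gzero M (n + int (Suc e))}"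
proof -
  have eq: "\<And>m. (\<lambda>k. if k = n then m else gzero M k) = single M n m" by (simp add: single_def)
  have key: "single M n m \<in> {h \<in> elems M. (fx M ^^ Suc e) h = fzero M} \<longleftrightarrow>
      gxi M (Suc e) n m = gzero M (n + int (Suc e))" if m: "m \<in> gcomp M n" for m
  proof -
    have "single M n m \<in> elems M" by (rule single_elems[OF gm m])
    moreover have "(fx M ^^ Suc e) (single M n m) = fzero M \<longleftrightarrow> gxi M (Suc e) n m = gzero M (n + int (Suc e))"
      by (rule fxpow_single_iff[OF gm])
    ultimately show ?thesis by blast
  qed
  show ?thesis
    unfolding hom_part_def eq Gamma_kill[OF gm K] using key by blast
qed

lemma Gamma_kill2:
  assumes gm: "is_gmod p M" and K: "kill M e"
  shows "Gamma M = {h \<in> elems M. \<forall>n. gxi M (Suc e) n (h n) = gzero M (n + int (Suc e))}"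
  unfolding Gamma_kill[OF gm K] fxpow_zero_iff[OF gm] ..

context
  fixes p :: nat and H :: "'l \<Rightarrow> ('r::comm_ring_1, 'm) gmod" and e :: nat
  assumes pp: "prime p" and ch: "CHAR('r) = p" and gmH: "\<And>l. is_gmod p (H l)"
    and KP: "kill (gprod H) e"
begin

lemma Kl: "kill (H l) e" using KP kill_gprod[where p=p and H=H, OF pp ch gmH] by blast

lemma gmP': "is_gmod p (gprod H)" by (rule is_gmod_gprod[where p=p and H=H, OF gmH])

lemma T_char: "hom_part (H l) (Gamma (H l)) n = {m \<in> gcomp (H l) n. gxi (H l) (Suc e) n m = gzero (H l) (n + int (Suc e))}"
  by (rule hom_part_kill[OF gmH Kl])

lemma S_char: "hom_part (gprod H) (Gamma (gprod H)) n = {v. \<forall>l. v l \<in> hom_part (H l) (Gamma (H l)) n}"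
  unfolding hom_part_kill[OF gmP' KP] T_char by (auto simp: gxi_gprod fun_eq_iff)

lemma zT: "gzero (H l) n \<in> hom_part (H l) (Gamma (H l)) n"
  unfolding T_char using gzero_in[OF gmH, of l n] gxi_zero[OF gmH, of l "Suc e" n] by simp

lemma projS: "(\<lambda>s. s l) ` hom_part (gprod H) (Gamma (gprod H)) n = hom_part (H l) (Gamma (H l)) n"
proof
  show "(\<lambda>s. s l) ` hom_part (gprod H) (Gamma (gprod H)) n \<subseteq> hom_part (H l) (Gamma (H l)) n"
    unfolding S_char by blast
  show "hom_part (H l) (Gamma (H l)) n \<subseteq> (\<lambda>s. s l) ` hom_part (gprod H) (Gamma (gprod H)) n"
  proof
    fix m assume m: "m \<in> hom_part (H l) (Gamma (H l)) n"
    let ?s = "\<lambda>l'. if l' = l then m else gzero (H l') n"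
    have sS: "?s \<in> hom_part (gprod H) (Gamma (gprod H)) n" unfolding S_char using m zT by simp
    show "m \<in> (\<lambda>s. s l) ` hom_part (gprod H) (Gamma (gprod H)) n"
      by (rule image_eqI[where x="?s"]) (simp, rule sS)
  qed
qed

lemma Gamma_gprod: "Gamma (gprod H) = elems (gprod (\<lambda>l. gsub (H l) (Gamma (H l))))"
proof -
  have "h \<in> Gamma (gprod H) \<longleftrightarrow> h \<in> elems (gprod (\<lambda>l. gsub (H l) (Gamma (H l))))" for h
    unfolding Gamma_kill2[OF gmP' KP] elems_def T_char gprod_sel gsub_sel gxi_gprod
    by (auto simp: fun_eq_iff)
  then show ?thesis by blast
qed


abbreviation "SS n \<equiv> hom_part (gprod H) (Gamma (gprod H)) n"
abbreviation "TT l n \<equiv> hom_part (H l) (Gamma (H l)) n"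

lemma coset_prj: "(\<lambda>a. a l) ` coset (gprod H) (Gamma (gprod H)) n v = coset (H l) (Gamma (H l)) n (v l)"
proof -
  have "(\<lambda>a. a l) ` coset (gprod H) (Gamma (gprod H)) n v = (\<lambda>s. gadd (H l) n (v l) (s l)) ` SS n"
    unfolding coset_def by (auto simp: image_iff)
  also have "\<dots> = (\<lambda>s'. gadd (H l) n (v l) s') ` ((\<lambda>s. s l) ` SS n)" by (simp add: image_image)
  also have "\<dots> = coset (H l) (Gamma (H l)) n (v l)" unfolding projS coset_def by blast
  finally show ?thesis .
qed

lemma coset_char: "coset (gprod H) (Gamma (gprod H)) n v = {u. \<forall>l. u l \<in> coset (H l) (Gamma (H l)) n (v l)}"
proof
  show "coset (gprod H) (Gamma (gprod H)) n v \<subseteq> {u. \<forall>l. u l \<in> coset (H l) (Gamma (H l)) n (v l)}"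
    using coset_prj by blast
  show "{u. \<forall>l. u l \<in> coset (H l) (Gamma (H l)) n (v l)} \<subseteq> coset (gprod H) (Gamma (gprod H)) n v"
  proof
    fix u assume "u \<in> {u. \<forall>l. u l \<in> coset (H l) (Gamma (H l)) n (v l)}"
    then have "\<forall>l. \<exists>s. s \<in> TT l n \<and> u l = gadd (H l) n (v l) s" unfolding coset_def by blast
    from choice[OF this] obtain s where s: "\<forall>l. s l \<in> TT l n \<and> u l = gadd (H l) n (v l) (s l)" by blast
    have "s \<in> SS n" unfolding S_char using s by blast
    moreover have "u = gadd (gprod H) n v s" using s by (simp add: fun_eq_iff)
    ultimately show "u \<in> coset (gprod H) (Gamma (gprod H)) n v" unfolding coset_def by blast
  qed
qed

lemma iso_ctx:
  "giso (gquot (gprod H) (Gamma (gprod H))) (gprod (\<lambda>l. gquot (H l) (Gamma (H l)))) (\<lambda>n A l. (\<lambda>a. a l) ` A)"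
  unfolding giso_def
proof (intro allI conjI ballI)
  fix n
  let ?phi = "\<lambda>A l. (\<lambda>a. a l) ` A"
  let ?co = "coset (gprod H) (Gamma (gprod H)) n"
  have phico: "?phi (?co v) = (\<lambda>l. coset (H l) (Gamma (H l)) n (v l))" for v
    using coset_prj by (simp add: fun_eq_iff)
  show "bij_betw (?phi) (gcomp (gquot (gprod H) (Gamma (gprod H))) n) (gcomp (gprod (\<lambda>l. gquot (H l) (Gamma (H l)))) n)"
    unfolding bij_betw_def
  proof
    show "inj_on ?phi (gcomp (gquot (gprod H) (Gamma (gprod H))) n)"
    proof (rule inj_onI)
      fix A B assume "A \<in> gcomp (gquot (gprod H) (Gamma (gprod H))) n" "B \<in> gcomp (gquot (gprod H) (Gamma (gprod H))) n"
        and eq: "?phi A = ?phi B"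
      then obtain v w where A: "A = ?co v" and B: "B = ?co w" by auto
      have "\<And>l. coset (H l) (Gamma (H l)) n (v l) = coset (H l) (Gamma (H l)) n (w l)"
        using eq unfolding A B phico by (simp add: fun_eq_iff)
      then show "A = B" unfolding A B coset_char by simp
    qed
    show "?phi ` gcomp (gquot (gprod H) (Gamma (gprod H))) n = gcomp (gprod (\<lambda>l. gquot (H l) (Gamma (H l)))) n"
    proof
      show "?phi ` gcomp (gquot (gprod H) (Gamma (gprod H))) n \<subseteq> gcomp (gprod (\<lambda>l. gquot (H l) (Gamma (H l)))) n"
      proof
        fix X assume "X \<in> ?phi ` gcomp (gquot (gprod H) (Gamma (gprod H))) n"
        then obtain v where v: "v \<in> gcomp (gprod H) n" and X: "X = ?phi (?co v)" by auto
        show "X \<in> gcomp (gprod (\<lambda>l. gquot (H l) (Gamma (H l)))) n"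
          unfolding X phico using v by auto
      qed
      show "gcomp (gprod (\<lambda>l. gquot (H l) (Gamma (H l)))) n \<subseteq> ?phi ` gcomp (gquot (gprod H) (Gamma (gprod H))) n"
      proof
        fix X assume "X \<in> gcomp (gprod (\<lambda>l. gquot (H l) (Gamma (H l)))) n"
        then have "\<forall>l. \<exists>w. w \<in> gcomp (H l) n \<and> X l = coset (H l) (Gamma (H l)) n w" by auto
        from choice[OF this] obtain v where v: "\<forall>l. v l \<in> gcomp (H l) n \<and> X l = coset (H l) (Gamma (H l)) n (v l)" by blast
        have "X = ?phi (?co v)" unfolding phico using v by (simp add: fun_eq_iff)
        moreover have "?co v \<in> gcomp (gquot (gprod H) (Gamma (gprod H))) n" using v by auto
        ultimately show "X \<in> ?phi ` gcomp (gquot (gprod H) (Gamma (gprod H))) n" by blast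
      qed
    qed
  qed
  fix A
  show "?phi (gsmult (gquot (gprod H) (Gamma (gprod H))) n r A) =
        gsmult (gprod (\<lambda>l. gquot (H l) (Gamma (H l)))) n r (?phi A)" for r
  proof (rule ext)
    fix l
    have pS: "\<And>s. s \<in> TT l n \<Longrightarrow> \<exists>s0 \<in> SS n. s = s0 l" using projS[of l n] by blast
    show "?phi (gsmult (gquot (gprod H) (Gamma (gprod H))) n r A) l =
        gsmult (gprod (\<lambda>l. gquot (H l) (Gamma (H l)))) n r (?phi A) l"
    proof
      show "?phi (gsmult (gquot (gprod H) (Gamma (gprod H))) n r A) l \<subseteq>
        gsmult (gprod (\<lambda>l. gquot (H l) (Gamma (H l)))) n r (?phi A) l"
        using projS[of l n] by auto
      show "gsmult (gprod (\<lambda>l. gquot (H l) (Gamma (H l)))) n r (?phi A) l \<subseteq>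
        ?phi (gsmult (gquot (gprod H) (Gamma (gprod H))) n r A) l"
      proof
        fix y assume "y \<in> gsmult (gprod (\<lambda>l. gquot (H l) (Gamma (H l)))) n r (?phi A) l"
        then obtain a s' where y: "y = gadd (H l) n (gsmult (H l) n r (a l)) s'" "a \<in> A" "s' \<in> TT l n" by auto
        from pS[OF y(3)] obtain s0 where s0: "s0 \<in> SS n" "s' = s0 l" by blast
        let ?x = "\<lambda>l. gadd (H l) n (gsmult (H l) n r (a l)) (s0 l)"
        have xin: "?x \<in> gsmult (gquot (gprod H) (Gamma (gprod H))) n r A" using y(2) s0(1) by auto
        have yx: "y = ?x l" using y s0 by simp
        show "y \<in> ?phi (gsmult (gquot (gprod H) (Gamma (gprod H))) n r A) l"
          by (rule image_eqI[where x="?x"], rule yx, rule xin)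
      qed
    qed
  qed
  show "?phi (gx (gquot (gprod H) (Gamma (gprod H))) n A) = gx (gprod (\<lambda>l. gquot (H l) (Gamma (H l)))) n (?phi A)"
  proof (rule ext)
    fix l
    have pS: "\<And>s. s \<in> TT l (n + 1) \<Longrightarrow> \<exists>s0 \<in> SS (n + 1). s = s0 l" using projS[of l "n + 1"] by blast
    show "?phi (gx (gquot (gprod H) (Gamma (gprod H))) n A) l = gx (gprod (\<lambda>l. gquot (H l) (Gamma (H l)))) n (?phi A) l"
    proof
      show "?phi (gx (gquot (gprod H) (Gamma (gprod H))) n A) l \<subseteq> gx (gprod (\<lambda>l. gquot (H l) (Gamma (H l)))) n (?phi A) l"
        using projS[of l "n + 1"] by auto
      show "gx (gprod (\<lambda>l. gquot (H l) (Gamma (H l)))) n (?phi A) l \<subseteq> ?phi (gx (gquot (gprod H) (Gamma (gprod H))) n A) l"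
      proof
        fix y assume "y \<in> gx (gprod (\<lambda>l. gquot (H l) (Gamma (H l)))) n (?phi A) l"
        then obtain a s' where y: "y = gadd (H l) (n + 1) (gx (H l) n (a l)) s'" "a \<in> A" "s' \<in> TT l (n + 1)" by auto
        from pS[OF y(3)] obtain s0 where s0: "s0 \<in> SS (n + 1)" "s' = s0 l" by blast
        let ?x = "\<lambda>l. gadd (H l) (n + 1) (gx (H l) n (a l)) (s0 l)"
        have xin: "?x \<in> gx (gquot (gprod H) (Gamma (gprod H))) n A" using y(2) s0(1) by auto
        have yx: "y = ?x l" using y s0 by simp
        show "y \<in> ?phi (gx (gquot (gprod H) (Gamma (gprod H))) n A) l"
          by (rule image_eqI[where x="?x"], rule yx, rule xin)
      qed
    qed
  qed
  fix B
  show "?phi (gadd (gquot (gprod H) (Gamma (gprod H))) n A B) =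
      gadd (gprod (\<lambda>l. gquot (H l) (Gamma (H l)))) n (?phi A) (?phi B)"
  proof (rule ext)
    fix l
    show "?phi (gadd (gquot (gprod H) (Gamma (gprod H))) n A B) l =
      gadd (gprod (\<lambda>l. gquot (H l) (Gamma (H l)))) n (?phi A) (?phi B) l"
    proof
      show "?phi (gadd (gquot (gprod H) (Gamma (gprod H))) n A B) l \<subseteq>
        gadd (gprod (\<lambda>l. gquot (H l) (Gamma (H l)))) n (?phi A) (?phi B) l" by auto
      show "gadd (gprod (\<lambda>l. gquot (H l) (Gamma (H l)))) n (?phi A) (?phi B) l \<subseteq>
        ?phi (gadd (gquot (gprod H) (Gamma (gprod H))) n A B) l"
      proof
        fix y assume "y \<in> gadd (gprod (\<lambda>l. gquot (H l) (Gamma (H l)))) n (?phi A) (?phi B) l"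
        then obtain a b where y: "y = gadd (H l) n (a l) (b l)" "a \<in> A" "b \<in> B" by auto
        let ?x = "\<lambda>l. gadd (H l) n (a l) (b l)"
        have xin: "?x \<in> gadd (gquot (gprod H) (Gamma (gprod H))) n A B" using y(2,3) by auto
        show "y \<in> ?phi (gadd (gquot (gprod H) (Gamma (gprod H))) n A B) l"
          by (rule image_eqI[where x="?x"], simp add: y(1), rule xin)
      qed
    qed
  qed
qed

end

lemma iso_exists:
  fixes p :: nat and H :: "'l \<Rightarrow> ('r::comm_ring_1, 'm) gmod" and e :: nat
  assumes pp: "prime p" and ch: "CHAR('r) = p" and gmH: "\<And>l. is_gmod p (H l)"
    and KP: "kill (gprod H) e"
  shows "giso (gquot (gprod H) (Gamma (gprod H))) (gprod (\<lambda>l. gquot (H l) (Gamma (H l)))) (\<lambda>n A l. (\<lambda>a. a l) ` A)"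
  by (rule iso_ctx[OF pp ch gmH KP])



theorem lemma2p3:
  fixes p :: nat and H :: "'l \<Rightarrow> ('r::comm_ring_1, 'm) gmod"
  assumes "noetherian TYPE('r)" and "prime p" and "CHAR('r) = p"
    and "\<And>l. is_gmod p (H l)"
  shows "Gset p (gprod H) = {\<Inter>l. B l | B. \<forall>l. B l \<in> Gset p (H l)}
    \<and> (\<forall>G'. (\<forall>I\<in>G'. graded_ideal p I) \<longrightarrow> (\<forall>l. Gset p (H l) = G') \<longrightarrow> Gset p (gprod H) = G')
    \<and> HSL (gprod H) = (SUP l. HSL (H l))
    \<and> (x_torsion_free (gprod H) \<longleftrightarrow> (\<forall>l. x_torsion_free (H l)))
    \<and> (HSL (gprod H) \<noteq> \<infinity> \<longrightarrow>
           Gamma (gprod H) = elems (gprod (\<lambda>l. gsub (H l) (Gamma (H l))))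
         \<and> (\<exists>\<phi>. giso (gquot (gprod H) (Gamma (gprod H)))
                      (gprod (\<lambda>l. gquot (H l) (Gamma (H l)))) \<phi>))"
proof -
  note pp = assms(2) and ch = assms(3) and gmH = assms(4)
  have gmP: "is_gmod p (gprod H)" by (rule is_gmod_gprod[where p=p and H=H, OF gmH])
  have P1: "Gset p (gprod H) = {\<Inter>l. B l | B. \<forall>l. B l \<in> Gset p (H l)}"
    by (rule Gset_gprod[where p=p and H=H, OF pp ch gmH])
  have P2: "\<forall>G'. (\<forall>I\<in>G'. graded_ideal p I) \<longrightarrow> (\<forall>l. Gset p (H l) = G') \<longrightarrow> Gset p (gprod H) = G'"
    using Gset_gprod_const[where p=p and H=H, OF pp ch gmH] by blast
  have P3: "HSL (gprod H) = (SUP l. HSL (H l))"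
    by (rule HSL_gprod[where p=p and H=H, OF pp ch gmH])
  have P4: "x_torsion_free (gprod H) \<longleftrightarrow> (\<forall>l. x_torsion_free (H l))"
    by (rule xtf_gprod[where p=p and H=H, OF pp ch gmH])
  have P5: "Gamma (gprod H) = elems (gprod (\<lambda>l. gsub (H l) (Gamma (H l))))
         \<and> (\<exists>\<phi>. giso (gquot (gprod H) (Gamma (gprod H)))
                      (gprod (\<lambda>l. gquot (H l) (Gamma (H l)))) \<phi>)"
    if fin: "HSL (gprod H) \<noteq> \<infinity>"
  proof -
    obtain e where "HSL (gprod H) = enat e" using fin by (cases "HSL (gprod H)") auto
    then have KP: "kill (gprod H) e" using HSL_le_iff[OF gmP, of e] by simp
    show ?thesis
      using Gamma_gprod[where p=p and H=H, OF pp ch gmH KP] iso_exists[where p=p and H=H, OF pp ch gmH KP]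
      by blast
  qed
  show ?thesis using P1 P2 P3 P4 P5 by blast
qed

end
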